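(* Let $\pi\in S_n$ be a 321-avoiding permutation which is not the identity, and let $i_1<i_2<\dots<i_r$ be its excedance locations (the indices $i$ with $\pi(i)>i$). Then the connectivity set of $\pi$ has cardinality $$i_1+\sum_{j=2}^{r}\max\{i_j-\pi(i_{j-1}),0\}+n-\pi(i_r).$$
   Context: A permutation $\pi$ of $[n]$ is 321-avoiding if there are no $i<j<k$ with $\pi(k)<\pi(j)<\pi(i)$. The connectivity set of $\sigma\in S_n$ is the set of indices $1\le i\le n$ such that $\sigma(k)<i$ for all $k<i$. *)

theory Defs
  imports "HOL-Combinatorics.Permutations"
begin

text \<open>Permutations of [n] = {1..n} are functions nat => nat with pi permutes {1..n}.\<close>

definition avoids321 :: "nat \<Rightarrow> (nat \<Rightarrow> nat) \<Rightarrow> bool" where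
  "avoids321 n \<pi> \<longleftrightarrow>
     \<not> (\<exists>i j k. 1 \<le> i \<and> i < j \<and> j < k \<and> k \<le> n \<and> \<pi> k < \<pi> j \<and> \<pi> j < \<pi> i)"

definition conn_set :: "nat \<Rightarrow> (nat \<Rightarrow> nat) \<Rightarrow> nat set" where
  "conn_set n \<sigma> = {i. 1 \<le> i \<and> i \<le> n \<and> (\<forall>k. 1 \<le> k \<and> k < i \<longrightarrow> \<sigma> k < i)}"

definition excedances :: "nat \<Rightarrow> (nat \<Rightarrow> nat) \<Rightarrow> nat set" where
  "excedances n \<pi> = {i. 1 \<le> i \<and> i \<le> n \<and> \<pi> i > i}"

end

theory Submission
  imports Defs
begin

definition SS :: "(nat \<Rightarrow> nat) \<Rightarrow> nat list \<Rightarrow> int" where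
  "SS f xs = (\<Sum>j\<in>{1..<length xs}. max (int (xs ! j) - int (f (xs ! (j - 1)))) 0)"

lemma SS_single: "SS f [x] = 0"
  by (simp add: SS_def)

lemma SS_cons2: "SS f (x # y # zs) = max (int y - int (f x)) 0 + SS f (y # zs)"
proof -
  let ?g = "\<lambda>xs j. max (int (xs ! j) - int (f (xs ! (j - 1)))) (0::int)"
  have "SS f (x # y # zs) = (\<Sum>j\<in>{1..<Suc (Suc (length zs))}. ?g (x#y#zs) j)"
    by (simp add: SS_def)
  also have "\<dots> = ?g (x#y#zs) 1 + (\<Sum>j\<in>{Suc 1..<Suc (Suc (length zs))}. ?g (x#y#zs) j)"
    by (rule sum.atLeast_Suc_lessThan) simp
  also have "(\<Sum>j\<in>{Suc 1..<Suc (Suc (length zs))}. ?g (x#y#zs) j)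
      = (\<Sum>j\<in>{1..<Suc (length zs)}. ?g (x#y#zs) (Suc j))"
    by (rule sum.shift_bounds_Suc_ivl)
  also have "\<dots> = (\<Sum>j\<in>{1..<Suc (length zs)}. ?g (y#zs) j)"
    by (rule sum.cong) (auto simp: nth_Cons split: nat.splits)
  finally show ?thesis by (simp add: SS_def)
qed

lemma union_card:
  assumes "xs \<noteq> []" "sorted_wrt (<) xs" "sorted_wrt (\<lambda>a b. f a < f b) xs"
    "\<forall>x\<in>set xs. x < f x"
  shows "int (card (\<Union>x\<in>set xs. {x<..f x})) = int (f (last xs)) - int (hd xs) - SS f xs"
  using assms
proof (induction xs)
  case Nil
  then show ?case by simp
next
  case (Cons x ys)
  show ?case
  proof (cases ys)
    case Nil
    then show ?thesis using Cons.prems by (simp add: SS_single)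
  next
    case (Cons y zs)
    note ys = this
    have IH: "int (card (\<Union>x\<in>set ys. {x<..f x})) = int (f (last ys)) - int y - SS f ys"
      using Cons.IH Cons.prems ys by auto
    have xy: "x < y" "f x < f y" using Cons.prems ys by auto
    have ge: "\<forall>z\<in>set ys. y \<le> z \<and> f x < f z" using Cons.prems ys by auto
    have int: "{x<..f x} \<inter> (\<Union>z\<in>set ys. {z<..f z}) = {y<..f x}"
    proof
      show "{x<..f x} \<inter> (\<Union>z\<in>set ys. {z<..f z}) \<subseteq> {y<..f x}"
        using ge by fastforce
      show "{y<..f x} \<subseteq> {x<..f x} \<inter> (\<Union>z\<in>set ys. {z<..f z})"
        using xy ys by auto
    qed
    have cu: "card ({x<..f x} \<union> (\<Union>z\<in>set ys. {z<..f z})) + card ({x<..f x} \<inter> (\<Union>z\<in>set ys. {z<..f z}))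
        = card {x<..f x} + card (\<Union>z\<in>set ys. {z<..f z})"
      by (rule card_Un_Int[symmetric]) auto
    have "int (card {y<..f x}) = max (int (f x) - int y) 0" by simp
    moreover have "int (card {x<..f x}) = int (f x) - int x" using Cons.prems by auto
    moreover have "last (x # ys) = last ys" using ys by simp
    ultimately show ?thesis using cu int IH ys
      by (simp add: SS_cons2)
  qed
qed

theorem mainTheorem13:
  fixes n :: nat and \<pi> :: "nat \<Rightarrow> nat"
  assumes "\<pi> permutes {1..n}" and "avoids321 n \<pi>" and "\<pi> \<noteq> id"
  shows "let xs = sorted_list_of_set (excedances n \<pi>); r = length xs in
    int (card (conn_set n \<pi>)) =
      int (xs ! 0)
      + (\<Sum>j\<in>{1..<r}. max (int (xs ! j) - int (\<pi> (xs ! (j - 1)))) 0)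
      + (int n - int (\<pi> (xs ! (r - 1))))"
proof -
  let ?E = "excedances n \<pi>"
  let ?U = "\<Union>x\<in>?E. {x<..\<pi> x}"
  have perm: "\<pi> permutes {1..n}" by fact
  have img: "\<And>k. k \<in> {1..n} \<Longrightarrow> \<pi> k \<in> {1..n}"
    using permutes_in_image[OF perm] by blast
  have inj: "inj \<pi>" using permutes_inj[OF perm] .
  have finE: "finite ?E" unfolding excedances_def by (rule finite_subset[of _ "{1..n}"]) auto
  have ne: "?E \<noteq> {}"
  proof -
    obtain i0 where "\<pi> i0 \<noteq> i0" using assms(3) by (metis id_apply ext)
    define i where "i = (LEAST i. \<pi> i \<noteq> i)"
    have pi: "\<pi> i \<noteq> i" unfolding i_def by (rule LeastI) fact
    have below: "\<And>j. j < i \<Longrightarrow> \<pi> j = j" unfolding i_def using not_less_Least by blast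
    have iin: "i \<in> {1..n}" using pi permutes_not_in[OF perm] by blast
    have "\<not> \<pi> i < i"
    proof
      assume "\<pi> i < i"
      then have "\<pi> (\<pi> i) = \<pi> i" using below by blast
      then have "\<pi> i = i" using inj by (meson injD)
      with pi show False by simp
    qed
    then have "i \<in> ?E" using pi iin unfolding excedances_def by auto
    then show ?thesis by blast
  qed
  have mono: "\<pi> e < \<pi> e'" if e: "e \<in> ?E" and e': "e' \<in> ?E" and lt: "e < e'" for e e'
  proof (rule ccontr)
    assume "\<not> \<pi> e < \<pi> e'"
    moreover have "\<pi> e \<noteq> \<pi> e'" using inj lt by (metis injD less_irrefl)
    ultimately have gt: "\<pi> e' < \<pi> e" by simp
    have e1: "1 \<le> e" "e' \<le> n" "e' < \<pi> e'" using e e' unfolding excedances_def by auto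
    have pe'n: "\<pi> e' \<le> n" using img e' unfolding excedances_def by auto
    have into: "\<pi> ` {e'<..n} \<subseteq> {\<pi> e'<..n}"
    proof
      fix v assume "v \<in> \<pi> ` {e'<..n}"
      then obtain k where k: "k \<in> {e'<..n}" "v = \<pi> k" by blast
      have "\<not> (\<pi> k < \<pi> e' \<and> \<pi> e' < \<pi> e)"
        using assms(2) e1 k lt unfolding avoids321_def by auto
      then have "\<pi> e' \<le> \<pi> k" using gt by simp
      moreover have "\<pi> k \<noteq> \<pi> e'" using inj k by (metis injD greaterThanAtMost_iff less_irrefl)
      moreover have "\<pi> k \<le> n" using img k e1 by fastforce
      ultimately show "v \<in> {\<pi> e'<..n}" using k by auto
    qed
    have "card {e'<..n} \<le> card {\<pi> e'<..n}"
      using card_inj_on_le[OF inj_on_subset[OF inj subset_UNIV] into] by simp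
    then show False using e1 pe'n by simp
  qed
  have U_sub: "?U \<subseteq> {1..n}"
    using img unfolding excedances_def by fastforce
  have C: "conn_set n \<pi> = {1..n} - ?U"
  proof (intro set_eqI iffI)
    fix i assume i: "i \<in> conn_set n \<pi>"
    then have "i \<notin> ?U" unfolding conn_set_def excedances_def by fastforce
    then show "i \<in> {1..n} - ?U" using i unfolding conn_set_def by auto
  next
    fix i assume i: "i \<in> {1..n} - ?U"
    have "\<pi> k < i" if "1 \<le> k" "k < i" for k
    proof (rule ccontr)
      assume "\<not> \<pi> k < i"
      then have "k \<in> ?E" "i \<in> {k<..\<pi> k}" using that i unfolding excedances_def by auto
      then show False using i by blast
    qed
    then show "i \<in> conn_set n \<pi>" using i unfolding conn_set_def by auto
  qed
  have finU: "finite ?U" using U_sub finite_subset by blast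
  have cardC: "card (conn_set n \<pi>) = n - card ?U"
    unfolding C using card_Diff_subset[OF finU U_sub] by simp
  have cardU: "card ?U \<le> n" using card_mono[OF _ U_sub] by simp
  define xs where "xs = sorted_list_of_set ?E"
  have setxs: "set xs = ?E" unfolding xs_def using finE by simp
  have xsne: "xs \<noteq> []" using setxs ne by auto
  have s1: "sorted_wrt (<) xs" unfolding xs_def by (rule strict_sorted_list_of_set)
  have s2: "sorted_wrt (\<lambda>a b. \<pi> a < \<pi> b) xs"
  proof -
    have "sorted_wrt (\<lambda>a b. a < b \<and> a \<in> ?E \<and> b \<in> ?E) xs"
      using s1 setxs by (simp add: sorted_wrt_iff_nth_less) (metis nth_mem order.strict_trans)
    then show ?thesis by (rule sorted_wrt_mono_rel[rotated]) (use mono in blast)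
  qed
  have s3: "\<forall>x\<in>set xs. x < \<pi> x" using setxs unfolding excedances_def by auto
  have UC: "int (card ?U) = int (\<pi> (last xs)) - int (hd xs) - SS \<pi> xs"
    using union_card[OF xsne s1 s2 s3] setxs by simp
  have "hd xs = xs ! 0" using xsne by (simp add: hd_conv_nth)
  moreover have "last xs = xs ! (length xs - 1)" using xsne by (simp add: last_conv_nth)
  ultimately show ?thesis
    using UC cardC cardU unfolding Let_def xs_def[symmetric] SS_def by simp
qed

end
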